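(* Let $b\ge1$, $g=4b^2$, and let $D$ be a digraph with directed girth at least $g$ such that for every arc $(x,y)\in A(D)$, either $D$ contains a directed cycle of length exactly $g$ through $(x,y)$, or there is $z\in V(D)\setminus\{x,y\}$ with $(z,x),(z,y)\in A(D)$. Then for every $(p,q)\in A(D)$ there is a gadget $G$ contained in $D$ which is either of type I or an extended gadget of type II, with $p(G)=p$, $q(G)=q$ and $|V(G)|\le 2g$.
   Context: Digraphs are finite, loopless, without parallel arcs (digons allowed); the directed girth is the minimum length of a directed cycle. Gadgets have designated vertices $p,q$ with arc $(p,q)$. Type I: a directed cycle of length at least $g$ through $(p,q)$. Basic type II: vertices $p,q,r$ and a directed path $P_1$ from $r$ to $p$ of length at least $2b^2+b-2$ with $q\notin V(P_1)$, every vertex of $P_1$ having an arc to $q$. Extended type II: a basic type-II gadget plus a directed path $P_2$ of length at least $b$ whose last vertex is $r$, with $V(P_1)\cap V(P_2)=\{r\}$, $q\notin V(P_2)$, and either an arc from the first vertex of $P_2$ to the second vertex of $P_1$, or an arc from some vertex of $V(P_1)\setminus\{r\}$ to the first vertex of $P_2$. *)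

theory Defs
  imports Main
begin

text \<open>A digraph is a finite vertex set V with an arc relation A \<subseteq> V \<times> V,
  loopless; A being a set excludes parallel arcs, digons are allowed.\<close>
definition digraph :: "'a set \<Rightarrow> ('a \<times> 'a) set \<Rightarrow> bool" where
  "digraph V A \<longleftrightarrow> finite V \<and> A \<subseteq> V \<times> V \<and> (\<forall>x. (x, x) \<notin> A)"

text \<open>A directed cycle, given as the cyclic list of its (distinct) vertices;
  its length is the number of vertices (= number of arcs).\<close>
definition dcycle :: "'a set \<Rightarrow> ('a \<times> 'a) set \<Rightarrow> 'a list \<Rightarrow> bool" where
  "dcycle V A cs \<longleftrightarrow> cs \<noteq> [] \<and> distinct cs \<and> set cs \<subseteq> V \<and>
     (\<forall>i < length cs. (cs ! i, cs ! ((i + 1) mod length cs)) \<in> A)"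

definition cycle_through :: "'a list \<Rightarrow> 'a \<Rightarrow> 'a \<Rightarrow> bool" where
  "cycle_through cs x y \<longleftrightarrow>
     (\<exists>i < length cs. cs ! i = x \<and> cs ! ((i + 1) mod length cs) = y)"

definition girth_ge :: "'a set \<Rightarrow> ('a \<times> 'a) set \<Rightarrow> nat \<Rightarrow> bool" where
  "girth_ge V A g \<longleftrightarrow> (\<forall>cs. dcycle V A cs \<longrightarrow> length cs \<ge> g)"

text \<open>A directed path, given as the list of its distinct vertices; its length is
  the number of arcs, i.e. length ps - 1.\<close>
definition dpath :: "'a set \<Rightarrow> ('a \<times> 'a) set \<Rightarrow> 'a list \<Rightarrow> bool" where
  "dpath V A ps \<longleftrightarrow> ps \<noteq> [] \<and> distinct ps \<and> set ps \<subseteq> V \<and>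
     (\<forall>i. Suc i < length ps \<longrightarrow> (ps ! i, ps ! Suc i) \<in> A)"

definition typeI_gadget :: "'a set \<Rightarrow> ('a \<times> 'a) set \<Rightarrow> nat \<Rightarrow> 'a \<Rightarrow> 'a \<Rightarrow> 'a list \<Rightarrow> bool" where
  "typeI_gadget V A g p q cs \<longleftrightarrow> dcycle V A cs \<and> length cs \<ge> g \<and> cycle_through cs p q"

text \<open>Basic type II gadget in D with designated p, q, r and path P1 from r to p
  of length at least 2b^2+b-2, q not on P1, each vertex of P1 has an arc to q;
  its vertex set is set P1 \<union> {q}.  (The arc (p,q) is included, as p is on P1.)\<close>
definition basic_typeII :: "'a set \<Rightarrow> ('a \<times> 'a) set \<Rightarrow> nat \<Rightarrow> 'a \<Rightarrow> 'a \<Rightarrow> 'a \<Rightarrow> 'a list \<Rightarrow> bool" where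
  "basic_typeII V A b p q r P1 \<longleftrightarrow>
     (p, q) \<in> A \<and> q \<in> V \<and> dpath V A P1 \<and> hd P1 = r \<and> last P1 = p \<and>
     length P1 - 1 \<ge> 2 * b^2 + b - 2 \<and> q \<notin> set P1 \<and>
     (\<forall>v \<in> set P1. (v, q) \<in> A)"

text \<open>Vertex set: set P1 \<union> set P2 \<union> {q}.\<close>
definition ext_typeII :: "'a set \<Rightarrow> ('a \<times> 'a) set \<Rightarrow> nat \<Rightarrow> 'a \<Rightarrow> 'a \<Rightarrow> 'a \<Rightarrow> 'a list \<Rightarrow> 'a list \<Rightarrow> bool" where
  "ext_typeII V A b p q r P1 P2 \<longleftrightarrow>
     basic_typeII V A b p q r P1 \<and> dpath V A P2 \<and> length P2 - 1 \<ge> b \<and>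
     last P2 = r \<and> set P1 \<inter> set P2 = {r} \<and> q \<notin> set P2 \<and>
     ((hd P2, P1 ! 1) \<in> A \<or> (\<exists>v \<in> set P1 - {r}. (v, hd P2) \<in> A))"

end

theory Submission
  imports Defs
begin


lemma dpath_single: "dpath V A [a] \<longleftrightarrow> a \<in> V"
  by (simp add: dpath_def)

lemma dpath_ne: "dpath V A P \<Longrightarrow> P \<noteq> []"
  by (simp add: dpath_def)

lemma dpath_Cons:
  assumes "L \<noteq> []"
  shows "dpath V A (z # L) \<longleftrightarrow> z \<in> V \<and> z \<notin> set L \<and> (z, hd L) \<in> A \<and> dpath V A L"
proof -
  have "(\<forall>i. Suc i < length (z#L) \<longrightarrow> ((z#L)!i, (z#L)!Suc i) \<in> A) \<longleftrightarrow>
        (z, hd L) \<in> A \<and> (\<forall>i. Suc i < length L \<longrightarrow> (L!i, L!Suc i) \<in> A)"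
  proof
    assume h: "\<forall>i. Suc i < length (z#L) \<longrightarrow> ((z#L)!i, (z#L)!Suc i) \<in> A"
    from h[rule_format, of 0] assms have "(z, hd L) \<in> A" by (simp add: hd_conv_nth)
    moreover have "\<forall>i. Suc i < length L \<longrightarrow> (L!i, L!Suc i) \<in> A"
      using h by (metis Suc_less_eq length_Cons nth_Cons_Suc)
    ultimately show "(z, hd L) \<in> A \<and> (\<forall>i. Suc i < length L \<longrightarrow> (L!i, L!Suc i) \<in> A)" by blast
  next
    assume h: "(z, hd L) \<in> A \<and> (\<forall>i. Suc i < length L \<longrightarrow> (L!i, L!Suc i) \<in> A)"
    show "\<forall>i. Suc i < length (z#L) \<longrightarrow> ((z#L)!i, (z#L)!Suc i) \<in> A"
    proof (intro allI impI)
      fix i assume "Suc i < length (z#L)"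
      then show "((z#L)!i, (z#L)!Suc i) \<in> A" using h assms by (cases i) (auto simp: hd_conv_nth)
    qed
  qed
  then show ?thesis using assms unfolding dpath_def by auto
qed

lemma dpath_append:
  "xs \<noteq> [] \<Longrightarrow> ys \<noteq> [] \<Longrightarrow> dpath V A (xs @ ys) \<longleftrightarrow>
     dpath V A xs \<and> dpath V A ys \<and> set xs \<inter> set ys = {} \<and> (last xs, hd ys) \<in> A"
proof (induction xs)
  case Nil thus ?case by simp
next
  case (Cons a xs)
  show ?case
  proof (cases "xs = []")
    case True thus ?thesis using Cons.prems by (auto simp add: dpath_Cons dpath_single)
  next
    case False
    then have "dpath V A ((a # xs) @ ys) \<longleftrightarrow> a \<in> V \<and> a \<notin> set (xs @ ys) \<and> (a, hd xs) \<in> A \<and> dpath V A (xs @ ys)"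
      using dpath_Cons[of "xs@ys" V A a] by simp
    with Cons.IH False Cons.prems dpath_Cons[of xs V A a] show ?thesis by auto
  qed
qed

lemma dpath_prefix: "dpath V A (xs @ ys) \<Longrightarrow> xs \<noteq> [] \<Longrightarrow> dpath V A xs"
  by (cases "ys = []") (auto simp: dpath_append)

lemma dpath_suffix: "dpath V A (xs @ ys) \<Longrightarrow> ys \<noteq> [] \<Longrightarrow> dpath V A ys"
  by (cases "xs = []") (auto simp: dpath_append)

lemma dpath_join:
  assumes "dpath V A xs" "dpath V A ys" "last xs = hd ys" "set xs \<inter> set ys \<subseteq> {hd ys}"
  shows "dpath V A (xs @ tl ys)"
proof (cases "tl ys = []")
  case True thus ?thesis using assms by simp
next
  case False
  have yne: "ys \<noteq> []" using assms(2) by (simp add: dpath_def)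
  then have ys: "ys = hd ys # tl ys" by simp
  have "dpath V A (hd ys # tl ys)" using assms(2) ys by simp
  then have h: "hd ys \<notin> set (tl ys)" "(hd ys, hd (tl ys)) \<in> A" "dpath V A (tl ys)"
    using dpath_Cons[OF False] by auto
  have sub: "set (tl ys) \<subseteq> set ys" using ys by (metis set_subset_Cons)
  have "set xs \<inter> set (tl ys) = {}" using assms(4) h(1) sub by blast
  then show ?thesis using dpath_append[of xs "tl ys"] assms h False dpath_ne[OF assms(1)] by auto
qed

lemma dpath_close:
  assumes "dpath V A P" "(last P, hd P) \<in> A"
  shows "dcycle V A P \<and> cycle_through P (last P) (hd P)"
proof -
  have ne: "P \<noteq> []" using assms(1) by (simp add: dpath_def)
  let ?n = "length P"
  have arcs: "\<forall>i < ?n. (P!i, P!((i+1) mod ?n)) \<in> A"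
  proof (intro allI impI)
    fix i assume i: "i < ?n"
    show "(P!i, P!((i+1) mod ?n)) \<in> A"
    proof (cases "Suc i < ?n")
      case True then show ?thesis using assms(1) by (simp add: dpath_def)
    next
      case False then have "i = ?n - 1" "Suc i = ?n" using i by auto
      then have "i = ?n - 1" "(i+1) mod ?n = 0" by auto
      then show ?thesis using assms(2) ne by (simp add: hd_conv_nth last_conv_nth)
    qed
  qed
  have "cycle_through P (last P) (hd P)" unfolding cycle_through_def
    by (rule exI[of _ "?n - 1"]) (use ne in \<open>simp add: hd_conv_nth last_conv_nth\<close>)
  then show ?thesis using arcs assms(1) ne unfolding dcycle_def dpath_def by auto
qed

lemma girth_path:
  assumes "girth_ge V A g" "dpath V A P" "(last P, hd P) \<in> A"
  shows "g \<le> length P"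
  using assms dpath_close unfolding girth_ge_def by blast

lemma cycle_rotate:
  assumes "dcycle V A cs" "cycle_through cs x y"
  shows "\<exists>P. dpath V A P \<and> hd P = y \<and> last P = x \<and> length P = length cs"
proof -
  obtain i where i: "i < length cs" "cs!i = x" "cs!((i+1) mod length cs) = y"
    using assms(2) unfolding cycle_through_def by auto
  let ?n = "length cs"
  define P where "P = rotate (Suc i) cs"
  have lenP: "length P = ?n" by (simp add: P_def)
  have nthP: "\<And>l. l < ?n \<Longrightarrow> P!l = cs!((Suc i + l) mod ?n)" unfolding P_def by (metis nth_rotate length_rotate)
  have ne: "cs \<noteq> []" using i by auto
  have Pne: "P \<noteq> []" using ne lenP by auto
  have "hd P = y" using Pne ne i by (simp add: hd_conv_nth nthP)
  moreover have "last P = x"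
  proof -
    have "last P = P!(?n - 1)" using Pne lenP by (simp add: last_conv_nth)
    also have "\<dots> = cs!((Suc i + (?n - 1)) mod ?n)" using ne by (simp add: nthP)
    also have "Suc i + (?n - 1) = i + ?n" using ne by simp
    finally show ?thesis using i by simp
  qed
  moreover have "dpath V A P"
  proof -
    have "distinct P" "set P \<subseteq> V" using assms(1) by (auto simp: P_def dcycle_def)
    moreover have "\<forall>l. Suc l < length P \<longrightarrow> (P!l, P!Suc l) \<in> A"
    proof (intro allI impI)
      fix l assume l: "Suc l < length P"
      define a where "a = (Suc i + l) mod ?n"
      have a: "a < ?n" using ne by (simp add: a_def)
      have "P!l = cs!a" using l lenP by (simp add: nthP a_def)
      moreover have "P!Suc l = cs!((a+1) mod ?n)" using l lenP
        by (simp add: nthP a_def mod_Suc_eq)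
      ultimately show "(P!l, P!Suc l) \<in> A" using assms(1) a unfolding dcycle_def by auto
    qed
    ultimately show ?thesis using Pne by (simp add: dpath_def)
  qed
  ultimately show ?thesis using lenP by blast
qed

lemma short_prefix:
  assumes "girth_ge V A g" "dpath V A C" "C = as @ x # bs" "(x, hd C) \<in> A"
  shows "g \<le> Suc (length as)"
proof -
  have "dpath V A ((as @ [x]) @ bs)" using assms(2,3) by simp
  then have d: "dpath V A (as @ [x])" using dpath_prefix by blast
  have "hd (as @ [x]) = hd C" using assms(3) by (cases as) auto
  then show ?thesis using girth_path[OF assms(1) d] assms(4) by simp
qed

lemma back_cycle:
  assumes gi: "girth_ge V A g" and "dpath V A (x # ys)" "ys \<noteq> []" "dpath V A (as @ [x])" "as \<noteq> []"
    "last ys = hd as" "set ys \<inter> set as \<subseteq> {hd as}"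
  shows "g \<le> length ys + length as"
proof -
  have das: "dpath V A as" using assms(4,5) dpath_prefix by blast
  have xas: "x \<notin> set as" using assms(4) by (simp add: dpath_def)
  have "set (x # ys) \<inter> set as \<subseteq> {hd as}" using xas assms(7) by auto
  then have dz: "dpath V A ((x # ys) @ tl as)"
    using dpath_join[OF assms(2) das] assms(3,6) by simp
  have lz: "last ((x # ys) @ tl as) = last as"
    using assms(3,5,6) by (cases "tl as = []") (auto simp: last_tl, metis last_ConsL list.collapse)
  have "(last as, x) \<in> A" using assms(4) dpath_append[of as "[x]"] assms(5) by simp
  then have "g \<le> length ((x # ys) @ tl as)" using girth_path[OF gi dz] lz by simp
  then show ?thesis using assms(5) by (cases as) auto
qed



lemma chain:
  assumes dg: "digraph V A" and gi: "girth_ge V A g"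
    and H: "\<forall>(x, y) \<in> A. (\<exists>cs. dcycle V A cs \<and> length cs = g \<and> cycle_through cs x y) \<or>
                        (\<exists>z \<in> V - {x, y}. (z, x) \<in> A \<and> (z, y) \<in> A)"
    and ut: "(u0, t) \<in> A"
  shows "k < g \<Longrightarrow> \<exists>L. dpath V A L \<and> last L = u0 \<and> length L \<le> Suc k \<and> (\<forall>x\<in>set L. (x, t) \<in> A)
     \<and> t \<notin> set L \<and> (length L = Suc k \<or> (\<exists>cs. dcycle V A cs \<and> length cs = g \<and> cycle_through cs (hd L) t))"
proof (induction k)
  case 0
  have "u0 \<in> V" "u0 \<noteq> t" using dg ut unfolding digraph_def by auto
  then have "dpath V A [u0]" "last [u0] = u0" "length [u0] \<le> Suc 0" "\<forall>x\<in>set [u0]. (x, t) \<in> A"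
    "t \<notin> set [u0]" "length [u0] = Suc 0" using ut by (auto simp: dpath_def)
  then show ?case by blast
next
  case (Suc k)
  from Suc have "k < g" by simp
  from Suc.IH[OF this] obtain L where L: "dpath V A L" "last L = u0" "length L \<le> Suc k" "\<forall>x\<in>set L. (x,t)\<in>A" "t \<notin> set L"
    and disj: "length L = Suc k \<or> (\<exists>cs. dcycle V A cs \<and> length cs = g \<and> cycle_through cs (hd L) t)"
    by blast
  show ?case
  proof (cases "\<exists>cs. dcycle V A cs \<and> length cs = g \<and> cycle_through cs (hd L) t")
    case True
    have "length L \<le> Suc (Suc k)" using L(3) by simp
    then show ?thesis using L True by blast
  next
    case False
    with disj have len: "length L = Suc k" by auto
    have Lne: "L \<noteq> []" using L(1) by (simp add: dpath_def)
    have "(hd L, t) \<in> A" using L(4) Lne by simp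
    from bspec[OF H this] have "(\<exists>cs. dcycle V A cs \<and> length cs = g \<and> cycle_through cs (hd L) t) \<or>
                        (\<exists>z \<in> V - {hd L, t}. (z, hd L) \<in> A \<and> (z, t) \<in> A)" by simp
    with False obtain z where z: "z \<in> V" "z \<noteq> hd L" "z \<noteq> t" "(z, hd L) \<in> A" "(z, t) \<in> A"
      by blast
    have zL: "z \<notin> set L"
    proof
      assume "z \<in> set L"
      then obtain xs ys where Ls: "L = xs @ z # ys" by (meson split_list)
      have xne: "xs \<noteq> []" using Ls z(2) by auto
      have "dpath V A ((xs @ [z]) @ ys)" using L(1) Ls by simp
      then have d: "dpath V A (xs @ [z])" using dpath_prefix by blast
      have "hd (xs @ [z]) = hd L" using Ls xne by simp
      then have "g \<le> length (xs @ [z])" using girth_path[OF gi d] z(4) by simp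
      moreover have "length (xs @ [z]) \<le> length L" using Ls by simp
      ultimately show False using len Suc.prems by simp
    qed
    have "dpath V A (z # L)" using dpath_Cons[OF Lne] z zL L(1) by simp
    moreover have "last (z # L) = u0" using L(2) Lne by simp
    moreover have "length (z # L) = Suc (Suc k)" using len by simp
    moreover have "\<forall>x\<in>set (z # L). (x, t) \<in> A" using L(4) z(5) by simp
    moreover have "t \<notin> set (z # L)" using L(5) z(3) by simp
    ultimately show ?thesis by (intro exI[of _ "z # L"]) simp
  qed
qed



lemma gadget:
  fixes V :: "'a set" and A :: "('a \<times> 'a) set" and b g :: nat
  assumes b1: "b \<ge> 1"
    and gdef: "g = 4 * b^2"
    and dg: "digraph V A"
    and gi: "girth_ge V A g"
    and H: "\<forall>(x, y) \<in> A. (\<exists>cs. dcycle V A cs \<and> length cs = g \<and> cycle_through cs x y) \<or>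
                        (\<exists>z \<in> V - {x, y}. (z, x) \<in> A \<and> (z, y) \<in> A)"
    and pq: "(p, q) \<in> A"
  shows "(\<exists>cs. typeI_gadget V A g p q cs \<and> card (set cs) \<le> 2 * g) \<or>
           (\<exists>r P1 P2. ext_typeII V A b p q r P1 P2 \<and>
                      card (set P1 \<union> set P2 \<union> {q}) \<le> 2 * g)"
proof -
  define M where "M = 2 * b^2 + b - 2"
  define s where "s = b^2"
  have sb: "b \<le> s" "1 \<le> s" using b1 unfolding s_def by (auto simp: power2_eq_square)
  have gs: "g = 4 * s" using gdef s_def by simp
  have Ms: "M + 2 = 2 * s + b" using sb unfolding M_def s_def by simp
  have M1: "1 \<le> M" using Ms sb b1 by linarith
  have Mg: "M < g" using Ms sb gs by linarith
  have bg: "b < g" using sb gs by linarith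
  have bMg: "b + M + 1 < g" using Ms sb gs by linarith
  have qV: "q \<in> V" using pq dg unfolding digraph_def by auto
  have typeI: "\<exists>cs. typeI_gadget V A g p q cs \<and> card (set cs) \<le> 2 * g"
    if Z: "dpath V A Z" "hd Z = q" "last Z = p" "g \<le> length Z" "length Z \<le> 2 * g" for Z
  proof -
    have "dcycle V A Z \<and> cycle_through Z p q" using dpath_close[OF Z(1)] Z(2,3) pq by simp
    moreover have "card (set Z) = length Z" using Z(1) by (simp add: dpath_def distinct_card)
    ultimately show ?thesis using Z unfolding typeI_gadget_def by (intro exI[of _ Z]) simp
  qed
  obtain L1 where L1: "dpath V A L1" "last L1 = p" "length L1 \<le> Suc M" "\<forall>x\<in>set L1. (x, q) \<in> A"
     "q \<notin> set L1" and disj1: "length L1 = Suc M \<or> (\<exists>cs. dcycle V A cs \<and> length cs = g \<and> cycle_through cs (hd L1) q)"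
    using chain[OF dg gi H pq Mg] by blast
  have L1ne: "L1 \<noteq> []" using dpath_ne[OF L1(1)] .
  show ?thesis
  proof (cases "length L1 = Suc M")
    case False
    with disj1 obtain cs where cs: "dcycle V A cs" "length cs = g" "cycle_through cs (hd L1) q" by blast
    obtain C where C: "dpath V A C" "hd C = q" "last C = hd L1" "length C = g"
      using cycle_rotate[OF cs(1,3)] cs(2) by auto
    have Cne: "C \<noteq> []" using dpath_ne[OF C(1)] .
    have CL: "set C \<inter> set L1 \<subseteq> {hd L1}"
    proof
      fix x assume x: "x \<in> set C \<inter> set L1"
      show "x \<in> {hd L1}"
      proof (rule ccontr)
        assume xn: "x \<notin> {hd L1}"
        obtain as bs where Cs: "C = as @ x # bs" using split_list[of x] x by (meson IntD1)
        have "bs \<noteq> []" using Cs C(3) xn by auto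
        then have "Suc (Suc (length as)) \<le> length C" using Cs by (cases bs) auto
        moreover have "g \<le> Suc (length as)" using short_prefix[OF gi C(1) Cs] C(2) L1(4) x by auto
        ultimately show False using C(4) by simp
      qed
    qed
    have dZ: "dpath V A (C @ tl L1)" using dpath_join[OF C(1) L1(1)] C(3) CL by simp
    have hZ: "hd (C @ tl L1) = q" using C(2) Cne by simp
    have lZ: "last (C @ tl L1) = p"
    proof (cases "tl L1 = []")
      case True then have "L1 = [hd L1]" using L1ne by (metis list.collapse)
      then have "hd L1 = last L1" by (metis last_ConsL)
      then show ?thesis using True C(3) L1(2) by simp
    next
      case False then show ?thesis using L1(2) L1ne by (simp add: last_tl)
    qed
    have "length (C @ tl L1) = g + (length L1 - 1)" using C(4) by simp
    then have "g \<le> length (C @ tl L1)" "length (C @ tl L1) \<le> 2 * g" using L1(3) Mg by auto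
    then show ?thesis using typeI[OF dZ hZ lZ] by blast
  next
    case True
    note lenL1 = True
    obtain r t rest where L1s: "L1 = r # t # rest"
      using lenL1 M1 by (cases L1; cases "tl L1") auto
    have hL1: "hd L1 = r" using L1s by simp
    have dL1': "dpath V A (r # (t # rest))" using L1(1) L1s by simp
    have rt: "(r, t) \<in> A" "r \<notin> set (t # rest)" "dpath V A (t # rest)" using dL1' dpath_Cons[of "t # rest" V A r] by auto
    have tq: "(t, q) \<in> A" using L1(4) L1s by simp
    obtain L2 where L2: "dpath V A L2" "last L2 = r" "length L2 \<le> Suc b" "\<forall>x\<in>set L2. (x, t) \<in> A"
      "t \<notin> set L2" and disj2: "length L2 = Suc b \<or> (\<exists>cs. dcycle V A cs \<and> length cs = g \<and> cycle_through cs (hd L2) t)"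
      using chain[OF dg gi H rt(1) bg] by blast
    have L2ne: "L2 \<noteq> []" using dpath_ne[OF L2(1)] .
    have rL2: "r \<in> set L2" using L2(2) L2ne by auto
    have claimD: "\<not> (\<exists>x\<in>set L2. x \<in> insert q (set L1) - {r})"
    proof
      assume "\<exists>x\<in>set L2. x \<in> insert q (set L1) - {r}"
      then obtain xs x ys where L2s: "L2 = xs @ x # ys" and xS: "x \<in> insert q (set L1) - {r}"
        and ysS: "\<forall>y\<in>set ys. y \<notin> insert q (set L1) - {r}"
        using split_list_last_prop[of L2 "\<lambda>x. x \<in> insert q (set L1) - {r}"] by blast
      have ysne: "ys \<noteq> []" using L2s L2(2) xS by auto
      have lys: "last ys = r" using L2s L2(2) ysne by simp
      have dxys: "dpath V A (x # ys)" using dpath_suffix[of V A xs "x # ys"] L2(1) L2s by simp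
      have lenys: "length ys \<le> b" using L2(3) L2s by simp
      show False
      proof (cases "x = q")
        case True
        have "set (q # ys) \<inter> set L1 \<subseteq> {hd L1}" using ysS L1(5) hL1 by auto
        moreover have dq: "dpath V A (q # ys)" using dxys True by simp
        moreover have "last (q # ys) = hd L1" using lys hL1 ysne by simp
        ultimately have dZ: "dpath V A ((q # ys) @ tl L1)"
          using dpath_join[OF dq L1(1)] by simp
        have "last ((q # ys) @ tl L1) = p" using L1s L1(2) by simp
        moreover have "hd ((q # ys) @ tl L1) = q" by simp
        ultimately have "g \<le> length ((q # ys) @ tl L1)" using girth_path[OF gi dZ] pq by simp
        then show False using lenys lenL1 bMg by simp
      next
        case False
        then have xL1: "x \<in> set L1" "x \<noteq> r" using xS by auto
        obtain as bs where L1s2: "L1 = as @ x # bs" using split_list[OF xL1(1)] by blast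
        have asne: "as \<noteq> []" using L1s2 xL1 hL1 by auto
        have das: "dpath V A (as @ [x])" using dpath_prefix[of V A "as @ [x]" bs] L1(1) L1s2 by simp
        have has: "hd as = r" using L1s2 asne hL1 by simp
        have "set ys \<inter> set as \<subseteq> {hd as}" using ysS L1s2 has by auto
        then have "g \<le> length ys + length as" using back_cycle[OF gi dxys ysne das asne] lys has by simp
        moreover have "length as \<le> M" using L1s2 lenL1 by simp
        ultimately show False using lenys bMg by simp
      qed
    qed
    have qL2: "q \<notin> set L2" using claimD L1(5) L1s by auto
    have L12: "set L1 \<inter> set L2 = {r}" using claimD rL2 L1s by auto
    have basic: "basic_typeII V A b p q r L1"
      unfolding basic_typeII_def using pq qV L1 hL1 lenL1 M_def by simp
    show ?thesis
    proof (cases "length L2 = Suc b")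
      case True
      have "(hd L2, L1 ! 1) \<in> A" using L2(4) L2ne L1s by simp
      then have ext: "ext_typeII V A b p q r L1 L2"
        unfolding ext_typeII_def using basic L2 True L12 qL2 by simp
      have "card (set L1 \<union> set L2 \<union> {q}) \<le> card (set L1) + card (set L2) + card {q}"
        by (meson card_Un_le le_trans add_le_mono order_refl)
      also have "\<dots> \<le> length L1 + length L2 + 1" by (simp add: card_length add_le_mono)
      finally have "card (set L1 \<union> set L2 \<union> {q}) \<le> 2 * g" using lenL1 True Ms sb gs by linarith
      then show ?thesis using ext by blast
    next
      case False
      with disj2 obtain cs where cs: "dcycle V A cs" "length cs = g" "cycle_through cs (hd L2) t" by blast
      obtain C where C: "dpath V A C" "hd C = t" "last C = hd L2" "length C = g"
        using cycle_rotate[OF cs(1,3)] cs(2) by auto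
      have Cne: "C \<noteq> []" using dpath_ne[OF C(1)] .
      have CL: "set C \<inter> set L2 \<subseteq> {hd L2}"
      proof
        fix x assume x: "x \<in> set C \<inter> set L2"
        show "x \<in> {hd L2}"
        proof (rule ccontr)
          assume xn: "x \<notin> {hd L2}"
          obtain as bs where Cs: "C = as @ x # bs" using split_list[of x] x by (meson IntD1)
          have "bs \<noteq> []" using Cs C(3) xn by auto
          then have "Suc (Suc (length as)) \<le> length C" using Cs by (cases bs) auto
          moreover have "g \<le> Suc (length as)" using short_prefix[OF gi C(1) Cs] C(2) L2(4) x by auto
          ultimately show False using C(4) by simp
        qed
      qed
      define W where "W = C @ tl L2"
      have dW: "dpath V A W" using dpath_join[OF C(1) L2(1)] C(3) CL W_def by simp
      have hW: "hd W = t" using C(2) Cne W_def by simp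
      have lW: "last W = r"
      proof (cases "tl L2 = []")
        case True then have "L2 = [hd L2]" using L2ne by (metis list.collapse)
        then have "hd L2 = last L2" by (metis last_ConsL)
        then show ?thesis using True C(3) L2(2) W_def by simp
      next
        case False then show ?thesis using L2(2) L2ne W_def by (simp add: last_tl)
      qed
      have lenW: "length W \<le> g + b" using C(4) L2(3) W_def by simp
      show ?thesis
      proof (cases "q \<in> set C")
        case True
        obtain as bs where Cs: "C = as @ q # bs" using split_list[OF True] by blast
        have asne: "as \<noteq> []" using Cs C(2) L1(5) L1s by auto
        have tas: "hd as = t" using Cs asne C(2) by simp
        have dqbs: "dpath V A (q # bs)" using dpath_suffix[of V A as "q # bs"] C(1) Cs by simp
        have lqbs: "last (q # bs) = hd L2" using C(3) Cs by simp
        have tnot: "t \<notin> set (q # bs)"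
        proof -
          have "distinct C" using C(1) by (simp add: dpath_def)
          then show ?thesis using Cs tas asne by (cases as) auto
        qed
        have wt: "(hd L2, t) \<in> A" using L2(4) L2ne by simp
        show ?thesis
        proof (cases "length as = 1")
          case False
          moreover have "length as \<noteq> 0" using asne by simp
          ultimately have las: "2 \<le> length as" by linarith
          have tV: "t \<in> V" using rt(3) by (simp add: dpath_def)
          have dY: "dpath V A ((q # bs) @ [t])"
            using dpath_append[of "q # bs" "[t]"] dqbs tnot lqbs wt tV by (auto simp: dpath_single)
          have "g \<le> length ((q # bs) @ [t])" using girth_path[OF gi dY] tq by simp
          moreover have "length as + 1 + length bs = g" using Cs C(4) by simp
          ultimately show ?thesis using las by simp
        next
          case True
          have disj: "set (q # bs) \<inter> set (t # rest) = {}"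
          proof (rule ccontr)
            assume "set (q # bs) \<inter> set (t # rest) \<noteq> {}"
            then obtain y where y: "y \<in> set (q # bs)" "y \<in> set (t # rest)" by blast
            have "y \<in> set L1" using y(2) L1s by simp
            then have yq: "(y, q) \<in> A" using L1(4) by simp
            obtain as' bs' where s': "q # bs = as' @ y # bs'" using split_list[OF y(1)] by blast
            have "g \<le> Suc (length as')" using short_prefix[OF gi dqbs s'] yq by simp
            moreover have "length (q # bs) = g - 1" using Cs C(4) True by simp
            moreover have "length (q # bs) = length as' + 1 + length bs'" using s' by simp
            ultimately show False using Mg by simp
          qed
          have dZ: "dpath V A ((q # bs) @ (t # rest))"
            using dpath_append[of "q # bs" "t # rest"] dqbs rt(3) disj lqbs wt by simp
          have "last ((q # bs) @ (t # rest)) = p" using L1s L1(2) by simp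
          moreover have "length ((q # bs) @ (t # rest)) = (g - 1) + M"
            using Cs C(4) True L1s lenL1 by simp
          ultimately show ?thesis using typeI[OF dZ] M1 Mg by simp
        qed
      next
        case False
        have qW: "q \<notin> set W" using False qL2 W_def L2ne by (auto dest: list.set_sel(2)[OF L2ne])
        have "t \<in> set W" using hW dpath_ne[OF dW] hd_in_set by metis
        moreover have "t \<in> set L1 - {r}" using L1s rt(2) by simp
        ultimately have "\<exists>x\<in>set W. x \<in> set L1 - {r}" by blast
        then obtain xs x ys where Ws: "W = xs @ x # ys" and xS: "x \<in> set L1 - {r}"
          and ysS: "\<forall>y\<in>set ys. y \<notin> set L1 - {r}"
          using split_list_last_prop[of W "\<lambda>x. x \<in> set L1 - {r}"] by blast
        have ysne: "ys \<noteq> []" using Ws lW xS by auto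
        have lys: "last ys = r" using Ws lW ysne by simp
        have dxys: "dpath V A (x # ys)" using dpath_suffix[of V A xs "x # ys"] dW Ws by simp
        have dys: "dpath V A ys" using dxys dpath_Cons[OF ysne] by simp
        have xhd: "(x, hd ys) \<in> A" using dxys dpath_Cons[OF ysne] by simp
        obtain as bs where L1s2: "L1 = as @ x # bs" using split_list[of x] xS by blast
        have asne: "as \<noteq> []" using L1s2 xS hL1 by auto
        have das: "dpath V A (as @ [x])" using dpath_prefix[of V A "as @ [x]" bs] L1(1) L1s2 by simp
        have has: "hd as = r" using L1s2 asne hL1 by simp
        have "set ys \<inter> set as \<subseteq> {hd as}" using ysS L1s2 has by auto
        then have "g \<le> length ys + length as" using back_cycle[OF gi dxys ysne das asne] lys has by simp
        moreover have "length as \<le> M" using L1s2 lenL1 by simp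
        ultimately have lenys: "b \<le> length ys - 1" using Ms sb gs by linarith
        have rys: "r \<in> set ys" using lys ysne by auto
        have L1ys: "set L1 \<inter> set ys = {r}" using ysS rys L1s by auto
        have qys: "q \<notin> set ys" using qW Ws by auto
        have "\<exists>v\<in>set L1 - {r}. (v, hd ys) \<in> A" using xS xhd by blast
        then have ext: "ext_typeII V A b p q r L1 ys"
          unfolding ext_typeII_def using basic dys lenys lys L1ys qys by simp
        have "length ys + 1 \<le> length W" using Ws by simp
        then have lys2: "length ys \<le> g + b - 1" using lenW by simp
        have "card (set L1 \<union> set ys \<union> {q}) \<le> card (set L1) + card (set ys) + card {q}"
          by (meson card_Un_le le_trans add_le_mono order_refl)
        also have "\<dots> \<le> length L1 + length ys + 1" by (simp add: card_length add_le_mono)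
        finally have "card (set L1 \<union> set ys \<union> {q}) \<le> 2 * g" using lenL1 lys2 Ms sb gs by linarith
        then show ?thesis using ext by blast
      qed
    qed
  qed
qed


theorem lemma2p10:
  fixes V :: "'a set" and A :: "('a \<times> 'a) set" and b g :: nat
  assumes "b \<ge> 1"
    and "g = 4 * b^2"
    and "digraph V A"
    and "girth_ge V A g"
    and "\<forall>(x, y) \<in> A. (\<exists>cs. dcycle V A cs \<and> length cs = g \<and> cycle_through cs x y) \<or>
                        (\<exists>z \<in> V - {x, y}. (z, x) \<in> A \<and> (z, y) \<in> A)"
  shows "\<forall>(p, q) \<in> A.
           (\<exists>cs. typeI_gadget V A g p q cs \<and> card (set cs) \<le> 2 * g) \<or>
           (\<exists>r P1 P2. ext_typeII V A b p q r P1 P2 \<and>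
                      card (set P1 \<union> set P2 \<union> {q}) \<le> 2 * g)"
proof (intro ballI)
  fix pq assume pqA: "pq \<in> A"
  obtain p q where pq: "pq = (p, q)" by fastforce
  have "(\<exists>cs. typeI_gadget V A g p q cs \<and> card (set cs) \<le> 2 * g) \<or>
           (\<exists>r P1 P2. ext_typeII V A b p q r P1 P2 \<and>
                      card (set P1 \<union> set P2 \<union> {q}) \<le> 2 * g)"
    using gadget[OF assms(1-5)] pqA pq by simp
  then show "case pq of (p, q) \<Rightarrow> (\<exists>cs. typeI_gadget V A g p q cs \<and> card (set cs) \<le> 2 * g) \<or>
           (\<exists>r P1 P2. ext_typeII V A b p q r P1 P2 \<and>
                      card (set P1 \<union> set P2 \<union> {q}) \<le> 2 * g)" using pq by simp
qed

end
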